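(* Let $\mathcal{H}$ be a real Hilbert space, $\rho\in\mathbb{R}$, and let $\mathcal{A}:\mathcal{H}\to 2^{\mathcal{H}}$ be a maximally $\rho$-comonotone operator. Let $\eta>\max\{-2\rho,0\}$ and let $x:\mathbb{R}\supseteq I\to\mathcal{H}$ be a differentiable function (such that $t\mapsto \mathcal{A}_\eta(x(t))$ is differentiable). Then $$\Big\langle \dot{x}(t), \frac{d}{dt}\mathcal{A}_{\eta}(x(t))\Big\rangle \geq 0 .$$
   Context: An operator $\mathcal{A}:\mathcal{H}\to 2^{\mathcal{H}}$ is $\rho$-comonotone if $\langle x-y,u-v\rangle\ge \rho\|u-v\|^2$ for all $(x,u),(y,v)$ in the graph $\mathrm{gra}\,\mathcal{A}=\{(x,u): u\in\mathcal{A}x\}$; it is maximally $\rho$-comonotone if it is $\rho$-comonotone and no other $\rho$-comonotone operator has a graph properly containing $\mathrm{gra}\,\mathcal{A}$. The resolvent of $\mathcal{A}$ with index $\eta>0$ is $J^{\mathcal{A}}_\eta=(\mathrm{Id}+\eta\mathcal{A})^{-1}$ and the Yosida regularization is $\mathcal{A}_\eta=\frac{1}{\eta}(\mathrm{Id}-J^{\mathcal{A}}_\eta)$. For $\mathcal{A}$ maximally $\rho$-comonotone and $\eta>\max\{-2\rho,0\}$, $J^{\mathcal{A}}_\eta$ and $\mathcal{A}_\eta$ are single-valued everywhere-defined operators $\mathcal{H}\to\mathcal{H}$. *)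

theory Defs
  imports "HOL-Analysis.Analysis"
begin

definition graph :: "('a \<Rightarrow> 'a set) \<Rightarrow> ('a \<times> 'a) set" where
  "graph A = {(x, u). u \<in> A x}"

definition comonotone :: "real \<Rightarrow> ('a::real_inner \<Rightarrow> 'a set) \<Rightarrow> bool" where
  "comonotone \<rho> A \<longleftrightarrow>
     (\<forall>x u y v. u \<in> A x \<longrightarrow> v \<in> A y \<longrightarrow> inner (x - y) (u - v) \<ge> \<rho> * (norm (u - v))\<^sup>2)"

definition max_comonotone :: "real \<Rightarrow> ('a::real_inner \<Rightarrow> 'a set) \<Rightarrow> bool" where
  "max_comonotone \<rho> A \<longleftrightarrow> comonotone \<rho> A \<and>
     (\<forall>B. comonotone \<rho> B \<longrightarrow> graph A \<subseteq> graph B \<longrightarrow> graph B = graph A)"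

text \<open>Resolvent J_\<eta> = (Id + \<eta>A)^{-1}, as a (single-valued) function:
  p = J x iff x \<in> p + \<eta> A p, i.e. (x - p)/\<eta> \<in> A p.\<close>

definition resolvent :: "('a::real_vector \<Rightarrow> 'a set) \<Rightarrow> real \<Rightarrow> 'a \<Rightarrow> 'a" where
  "resolvent A \<eta> x = (THE p. x \<in> (\<lambda>u. p + \<eta> *\<^sub>R u) ` A p)"

definition yosida :: "('a::real_vector \<Rightarrow> 'a set) \<Rightarrow> real \<Rightarrow> 'a \<Rightarrow> 'a" where
  "yosida A \<eta> x = (1 / \<eta>) *\<^sub>R (x - resolvent A \<eta> x)"

end

theory Submission
  imports Defs
begin


lemma monotone_avg:
  fixes f g :: "'b \<Rightarrow> 'a::real_inner"
  assumes Q: "finite Q" and u: "\<forall>i\<in>Q. 0 \<le> u i" "sum u Q = 1"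
    and mono: "\<forall>i\<in>Q. \<forall>j\<in>Q. inner (f i - f j) (g i - g j) \<ge> 0"
  shows "inner (\<Sum>i\<in>Q. u i *\<^sub>R f i) (\<Sum>i\<in>Q. u i *\<^sub>R g i) \<le> (\<Sum>i\<in>Q. u i * inner (f i) (g i))"
proof -
  let ?F = "\<Sum>i\<in>Q. u i *\<^sub>R f i" and ?G = "\<Sum>i\<in>Q. u i *\<^sub>R g i"
  have 0: "0 \<le> (\<Sum>i\<in>Q. \<Sum>j\<in>Q. u i * u j * inner (f i - f j) (g i - g j))"
    using u mono by (intro sum_nonneg) (simp add: mult_nonneg_nonneg)
  have e: "inner (f i - f j) (g i - g j) = inner (f i) (g i) + inner (f j) (g j) - inner (f i) (g j) - inner (f j) (g i)" for i j
    by (simp add: inner_diff_left inner_diff_right)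
  have a: "(\<Sum>i\<in>Q. \<Sum>j\<in>Q. u i * u j * inner (f i) (g i)) = (\<Sum>i\<in>Q. u i * inner (f i) (g i))"
    by (simp add: sum_distrib_left[symmetric] sum_distrib_right[symmetric] u mult.commute mult.left_commute)
  have b: "(\<Sum>i\<in>Q. \<Sum>j\<in>Q. u i * u j * inner (f j) (g j)) = (\<Sum>i\<in>Q. u i * inner (f i) (g i))"
    apply (subst sum.swap) by (simp add: sum_distrib_left[symmetric] sum_distrib_right[symmetric] u mult.commute mult.left_commute)
  have c: "(\<Sum>i\<in>Q. \<Sum>j\<in>Q. u i * u j * inner (f i) (g j)) = inner ?F ?G"
    apply (simp add: inner_sum_left inner_sum_right sum_distrib_left mult.assoc)
    apply (subst sum.swap) apply (simp add: mult.left_commute)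
    done
  have d: "(\<Sum>i\<in>Q. \<Sum>j\<in>Q. u i * u j * inner (f j) (g i)) = inner ?F ?G"
    by (simp add: inner_sum_left inner_sum_right sum_distrib_left mult.assoc)
  have "(\<Sum>i\<in>Q. \<Sum>j\<in>Q. u i * u j * inner (f i - f j) (g i - g j))
      = (\<Sum>i\<in>Q. \<Sum>j\<in>Q. u i * u j * inner (f i) (g i)) + (\<Sum>i\<in>Q. \<Sum>j\<in>Q. u i * u j * inner (f j) (g j))
        - (\<Sum>i\<in>Q. \<Sum>j\<in>Q. u i * u j * inner (f i) (g j)) - (\<Sum>i\<in>Q. \<Sum>j\<in>Q. u i * u j * inner (f j) (g i))"
    unfolding e by (simp add: ring_distribs sum.distrib sum_subtractf)
  with 0 a b c d show ?thesis by linarith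
qed

lemma sqhelp:
  fixes z e :: "'a::real_inner"
  shows "(norm (z + (1/2) *\<^sub>R e))\<^sup>2 = (norm z)\<^sup>2 + inner z e + (norm e)\<^sup>2 / 4"
  by (simp add: power2_norm_eq_inner inner_add_left inner_add_right inner_commute)

lemma finite_step:
  fixes G :: "('a::real_inner \<times> 'a) set"
  assumes fin: "finite G"
    and mono: "\<And>y1 v1 y2 v2. (y1,v1)\<in>G \<Longrightarrow> (y2,v2)\<in>G \<Longrightarrow> inner (y1 - y2) (v1 - v2) \<ge> 0"
  shows "\<exists>x. \<forall>(y,v)\<in>G. inner (x - y) (x + v) \<le> 0"
proof (cases "G = {}")
  case True then show ?thesis by auto
next
  case False
  define pt where "pt = (\<lambda>(y::'a,v::'a). (y, v, inner y v))"
  define P where "P = pt ` G"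
  define K where "K = convex hull P"
  define \<Psi> where "\<Psi> = (\<lambda>q::'a \<times> 'a \<times> real. - (norm (fst q - fst (snd q)))\<^sup>2 / 4 - snd (snd q))"
  have finP: "finite P" using fin by (simp add: P_def)
  have cK: "compact K" unfolding K_def using finP by (rule finite_imp_compact_convex_hull)
  have neK: "K \<noteq> {}" using False by (simp add: K_def P_def)
  have contPsi: "continuous_on K \<Psi>" unfolding \<Psi>_def by (intro continuous_intros) auto
  obtain Q where QK: "Q \<in> K" and Qmax: "\<forall>q\<in>K. \<Psi> q \<le> \<Psi> Q"
    using continuous_attains_sup[OF cK neK contPsi] by blast
  obtain Y V S where QYVS: "Q = (Y, V, S)" by (cases Q) auto
  obtain u where u0: "\<forall>q\<in>P. 0 \<le> u q" and u1: "sum u P = 1" and uQ: "(\<Sum>q\<in>P. u q *\<^sub>R q) = Q"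
    using QK unfolding K_def convex_hull_finite[OF finP] by blast
  have Yeq: "Y = (\<Sum>q\<in>P. u q *\<^sub>R fst q)"
  proof -
    have "Y = fst Q" by (simp add: QYVS)
    also have "\<dots> = (\<Sum>q\<in>P. u q *\<^sub>R fst q)" unfolding uQ[symmetric] by (simp add: fst_sum)
    finally show ?thesis .
  qed
  have Veq: "V = (\<Sum>q\<in>P. u q *\<^sub>R fst (snd q))"
  proof -
    have "V = fst (snd Q)" by (simp add: QYVS)
    also have "\<dots> = (\<Sum>q\<in>P. u q *\<^sub>R fst (snd q))" unfolding uQ[symmetric] by (simp add: fst_sum snd_sum)
    finally show ?thesis .
  qed
  have Seq: "S = (\<Sum>q\<in>P. u q * inner (fst q) (fst (snd q)))"
  proof -
    have "S = snd (snd Q)" by (simp add: QYVS)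
    also have "\<dots> = (\<Sum>q\<in>P. u q * snd (snd q))" unfolding uQ[symmetric] by (simp add: snd_sum)
    also have "\<dots> = (\<Sum>q\<in>P. u q * inner (fst q) (fst (snd q)))"
      by (rule sum.cong) (auto simp: P_def pt_def)
    finally show ?thesis .
  qed
  have monoP: "\<forall>i\<in>P. \<forall>j\<in>P. inner (fst i - fst j) (fst (snd i) - fst (snd j)) \<ge> 0"
    using mono by (auto simp: P_def pt_def)
  have "inner Y V \<le> S"
    using monotone_avg[OF finP u0 u1 monoP] Yeq Veq Seq by simp
  then have PsiQ: "\<Psi> Q \<le> 0"
  proof -
    assume h: "inner Y V \<le> S"
    have "(norm (Y - V))\<^sup>2 / 4 + inner Y V = (norm (Y + V))\<^sup>2 / 4"
      by (simp add: power2_norm_eq_inner inner_diff_left inner_diff_right inner_add_left inner_add_right inner_commute field_simps)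
    moreover have "\<Psi> Q = - (norm (Y - V))\<^sup>2 / 4 - S" by (simp add: \<Psi>_def QYVS)
    moreover have "0 \<le> (norm (Y + V))\<^sup>2" by simp
    ultimately show ?thesis using h by linarith
  qed
  define x where "x = (1/2) *\<^sub>R (Y - V)"
  show ?thesis
  proof (intro exI ballI, clarify)
    fix y v assume yv: "(y, v) \<in> G"
    define \<phi> where "\<phi> = (\<lambda>z. inner (z - y) (z + v))"
    define w where "w = (1/2) *\<^sub>R (y - v) - x"
    have ptK: "(y, v, inner y v) \<in> K"
      using yv hull_subset[of P convex] by (force simp: K_def P_def pt_def)
    have le: "\<phi> (x + t *\<^sub>R w) \<le> 0" if t: "0 < t" "t \<le> 1" for t
    proof -
      define Qt where "Qt = (1 - t) *\<^sub>R Q + t *\<^sub>R (y, v, inner y v)"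
      have "Qt \<in> K" unfolding Qt_def K_def
        using QK ptK t unfolding K_def by (intro convexD_alt[OF convex_convex_hull]) auto
      then have A: "\<Psi> Qt \<le> \<Psi> Q" using Qmax by blast
      define xt where "xt = x + t *\<^sub>R w"
      have xt: "xt = (1/2) *\<^sub>R (fst Qt - fst (snd Qt))"
        by (simp add: xt_def Qt_def QYVS x_def w_def algebra_simps)
      define \<Lambda> where "\<Lambda> = (\<lambda>(q::'a \<times> 'a \<times> real) z. (norm z)\<^sup>2 + inner z (fst (snd q) - fst q) - snd (snd q))"
      have L1: "\<Psi> q = \<Lambda> q ((1/2) *\<^sub>R (fst q - fst (snd q)))" for q
        by (simp add: \<Psi>_def \<Lambda>_def power2_norm_eq_inner inner_diff_left inner_diff_right inner_commute field_simps)
      have L2: "\<Psi> q \<le> \<Lambda> q z" for q z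
      proof -
        obtain a b c where q: "q = (a, b, c)" by (cases q) auto
        have "\<Lambda> q z - \<Psi> q = (norm (z + (1/2) *\<^sub>R (b - a)))\<^sup>2"
          by (simp add: \<Psi>_def \<Lambda>_def q sqhelp norm_minus_commute)
        then show ?thesis by (smt (verit) zero_le_power2)
      qed
      have L3: "\<Lambda> Qt z = (1 - t) * \<Lambda> Q z + t * \<phi> z" for z
        by (simp add: \<Lambda>_def \<phi>_def Qt_def QYVS power2_norm_eq_inner inner_diff_left inner_diff_right
            inner_add_left inner_add_right inner_commute algebra_simps)
      have "\<Psi> Qt = (1 - t) * \<Lambda> Q xt + t * \<phi> xt" using L1 L3 xt by simp
      moreover have "\<Psi> Q \<le> \<Lambda> Q xt" by (rule L2)
      ultimately have "(1 - t) * \<Psi> Q + t * \<phi> xt \<le> \<Psi> Q"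
        using A t by (smt (verit) mult_left_mono)
      then have "t * \<phi> xt \<le> t * \<Psi> Q" by (simp add: algebra_simps)
      then have "\<phi> xt \<le> \<Psi> Q" using t by simp
      then show ?thesis using PsiQ xt_def by simp
    qed
    have lim: "((\<lambda>t. \<phi> (x + t *\<^sub>R w)) \<longlongrightarrow> \<phi> (x + 0 *\<^sub>R w)) (at_right 0)"
      unfolding \<phi>_def by (intro tendsto_intros)
    have ev: "\<forall>\<^sub>F t in at_right 0. \<phi> (x + t *\<^sub>R w) \<le> 0"
      unfolding eventually_at_right_field
      by (intro exI[of _ 1]) (auto intro: le)
    have "\<phi> (x + 0 *\<^sub>R w) \<le> 0"
      by (rule tendsto_upperbound[OF lim ev]) simp
    then show "inner (x - y) (x + v) \<le> 0" by (simp add: \<phi>_def)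
  qed
qed



lemma para:
  fixes p q :: "'a::real_inner"
  shows "(norm (p - q))\<^sup>2 = 2 * (norm p)\<^sup>2 + 2 * (norm q)\<^sup>2 - (norm (p + q))\<^sup>2"
  by (simp add: power2_norm_eq_inner inner_diff_left inner_diff_right inner_add_left inner_add_right inner_commute)

lemma sqrt_seq_zero: "(\<lambda>n. sqrt (6 / real (Suc n))) \<longlonglongrightarrow> 0"
proof -
  have "(\<lambda>n. 6 * inverse (real (Suc n))) \<longlonglongrightarrow> 6 * 0"
    by (intro tendsto_mult tendsto_const LIMSEQ_inverse_real_of_nat)
  then have "(\<lambda>n. sqrt (6 * inverse (real (Suc n)))) \<longlonglongrightarrow> sqrt (6 * 0)"
    by (rule tendsto_real_sqrt)
  then show ?thesis by (simp add: divide_inverse)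
qed

lemma small_tendsto:
  fixes a :: "nat \<Rightarrow> 'a::real_normed_vector"
  assumes "\<And>n. (norm (a n))\<^sup>2 \<le> 6 / real (Suc n)"
  shows "a \<longlonglongrightarrow> 0"
  by (rule Lim_null_comparison[OF _ sqrt_seq_zero]) (use assms real_le_rsqrt in auto)

lemma small_cauchy:
  fixes p :: "nat \<Rightarrow> 'a::real_normed_vector"
  assumes "\<And>n k. n \<le> k \<Longrightarrow> (norm (p n - p k))\<^sup>2 \<le> 6 / real (Suc n)"
  shows "Cauchy p"
proof (rule CauchyI)
  fix e :: real assume e: "0 < e"
  obtain N where N: "\<forall>n\<ge>N. norm (sqrt (6 / real (Suc n)) - 0) < e"
    using sqrt_seq_zero[unfolded LIMSEQ_iff] e by blast
  have b: "norm (p n - p k) < e" if "N \<le> n" "n \<le> k" for n k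
  proof -
    have "norm (p n - p k) \<le> sqrt (6 / real (Suc n))" using assms[OF that(2)] real_le_rsqrt by blast
    moreover have "sqrt (6 / real (Suc n)) < e" using N that(1) by auto
    ultimately show ?thesis by linarith
  qed
  show "\<exists>M. \<forall>m\<ge>M. \<forall>n\<ge>M. norm (p m - p n) < e"
  proof (intro exI allI impI)
    fix m n assume "N \<le> m" "N \<le> n"
    then show "norm (p m - p n) < e"
      using b[of m n] b[of n m] norm_minus_commute[of "p m" "p n"] by (cases "m \<le> n") auto
  qed
qed

lemma fip_hilbert:
  fixes F :: "'a::{real_inner,complete_space} set set"
  assumes cl: "\<And>K. K \<in> F \<Longrightarrow> closed K" and cv: "\<And>K. K \<in> F \<Longrightarrow> convex K"
    and K0: "bounded K0" "closed K0" "convex K0"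
    and fip: "\<And>S. finite S \<Longrightarrow> S \<subseteq> F \<Longrightarrow> K0 \<inter> \<Inter>S \<noteq> {}"
  shows "K0 \<inter> \<Inter>F \<noteq> {}"
proof -
  define C where "C S = K0 \<inter> \<Inter>S" for S
  define m where "m S = Inf ((\<lambda>x. (norm x)\<^sup>2) ` C S)" for S
  define D where "D = Sup (m ` {S. finite S \<and> S \<subseteq> F})"
  obtain R where R: "\<forall>x\<in>K0. norm x \<le> R" using K0(1) bounded_iff by blast
  have Cne: "C S \<noteq> {}" if "finite S" "S \<subseteq> F" for S using fip[OF that] by (simp add: C_def)
  have Ccv: "convex (C S)" if "S \<subseteq> F" for S
    unfolding C_def using that cv K0(3) by (intro convex_Int convex_Inter) auto
  have Canti: "C S' \<subseteq> C S" if "S \<subseteq> S'" for S S' using that by (auto simp: C_def)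
  have bdd: "bdd_below ((\<lambda>x. (norm x)\<^sup>2) ` C S)" for S
    by (rule bdd_belowI[of _ 0]) auto
  have mle: "m S \<le> (norm x)\<^sup>2" if "x \<in> C S" for S x
    unfolding m_def using that bdd by (intro cInf_lower) auto
  have mR: "m S \<le> R\<^sup>2" if fS: "finite S" "S \<subseteq> F" for S
  proof -
    obtain x where x: "x \<in> C S" using Cne[OF fS] by blast
    then have "norm x \<le> R" using R by (auto simp: C_def)
    then have "(norm x)\<^sup>2 \<le> R\<^sup>2" by (intro power_mono) auto
    then show ?thesis using mle[OF x] by linarith
  qed
  have m_mono: "m S \<le> m S'" if "finite S'" "S' \<subseteq> F" "S \<subseteq> S'" for S S'
    unfolding m_def using Cne[OF that(1,2)] Canti[OF that(3)] bdd
    by (intro cInf_superset_mono) auto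
  have bddD: "bdd_above (m ` {S. finite S \<and> S \<subseteq> F})"
    by (rule bdd_aboveI[of _ "R\<^sup>2"]) (auto intro: mR)
  have mD: "m S \<le> D" if "finite S" "S \<subseteq> F" for S
    unfolding D_def using that bddD by (intro cSup_upper) auto
  have mapprox: "\<exists>x\<in>C S. (norm x)\<^sup>2 < m S + e" if "finite S" "S \<subseteq> F" "e > 0" for S e
  proof -
    have "m S < m S + e" using that by simp
    moreover have "m S < m S + e \<longleftrightarrow> (\<exists>y\<in>(\<lambda>x. (norm x)\<^sup>2) ` C S. y < m S + e)"
      unfolding m_def using Cne[OF that(1,2)] by (intro cInf_less_iff bdd) auto
    ultimately show ?thesis by auto
  qed
  have Dapprox: "\<exists>S. finite S \<and> S \<subseteq> F \<and> D - e < m S" if "e > 0" for e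
  proof -
    have "D - e < D" using that by simp
    moreover have "D - e < D \<longleftrightarrow> (\<exists>y\<in>m ` {S. finite S \<and> S \<subseteq> F}. D - e < y)"
      unfolding D_def by (intro less_cSup_iff bddD) blast
    ultimately show ?thesis by auto
  qed
  have key: "(norm (p - q))\<^sup>2 \<le> 2 * (norm p)\<^sup>2 + 2 * (norm q)\<^sup>2 - 4 * m S"
    if "S \<subseteq> F" "p \<in> C S" "q \<in> C S" for S p q
  proof -
    have "(1/2) *\<^sub>R p + (1/2) *\<^sub>R q \<in> C S"
      using convexD[OF Ccv[OF that(1)] that(2,3), of "1/2" "1/2"] by simp
    then have "m S \<le> (norm ((1/2) *\<^sub>R p + (1/2) *\<^sub>R q))\<^sup>2" by (rule mle)
    also have "\<dots> = (norm (p + q))\<^sup>2 / 4"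
      by (simp add: scaleR_add_right[symmetric] power_mult_distrib power2_eq_square)
    finally show ?thesis using para[of p q] by linarith
  qed
  have "\<forall>n. \<exists>S. finite S \<and> S \<subseteq> F \<and> D - 1 / real (Suc n) < m S"
    using Dapprox by simp
  then obtain Sf where Sf: "\<And>n. finite (Sf n) \<and> Sf n \<subseteq> F \<and> D - 1 / real (Suc n) < m (Sf n)"
    by metis
  define T where "T n = \<Union> (Sf ` {..n})" for n
  have Tfin: "finite (T n)" "T n \<subseteq> F" for n using Sf by (auto simp: T_def)
  have Tmono: "T n \<subseteq> T k" if "n \<le> k" for n k using that by (force simp: T_def)
  have TD: "D - 1 / real (Suc n) < m (T n)" for n
  proof -
    have "Sf n \<subseteq> T n" by (auto simp: T_def)
    then show ?thesis using Sf[of n] m_mono[OF Tfin, of "Sf n" n] by linarith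
  qed
  have "\<forall>n. \<exists>x. x \<in> C (T n) \<and> (norm x)\<^sup>2 < m (T n) + 1 / real (Suc n)"
  proof
    fix n show "\<exists>x. x \<in> C (T n) \<and> (norm x)\<^sup>2 < m (T n) + 1 / real (Suc n)"
      using mapprox[OF Tfin(1)[of n] Tfin(2)[of n], of "1 / real (Suc n)"] by auto
  qed
  then obtain p where p: "\<And>n. p n \<in> C (T n) \<and> (norm (p n))\<^sup>2 < m (T n) + 1 / real (Suc n)"
    by metis
  have inv_mono: "1 / real (Suc k) \<le> 1 / real (Suc n)" if "n \<le> k" for n k
    using that by (simp add: frac_le)
  have pd: "(norm (p n - p k))\<^sup>2 \<le> 6 / real (Suc n)" if "n \<le> k" for n k
  proof -
    have "p k \<in> C (T n)" using p[of k] Canti[OF Tmono[OF that]] by blast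
    then have "(norm (p n - p k))\<^sup>2 \<le> 2 * (norm (p n))\<^sup>2 + 2 * (norm (p k))\<^sup>2 - 4 * m (T n)"
      using key[OF Tfin(2) conjunct1[OF p[of n]]] by blast
    moreover have "m (T k) \<le> D" using mD[OF Tfin] .
    moreover have "6 / real (Suc n) = 6 * (1 / real (Suc n))" by simp
    ultimately show ?thesis using conjunct2[OF p[of n]] conjunct2[OF p[of k]] TD[of n] inv_mono[OF that]
      by linarith
  qed
  have "Cauchy p" by (rule small_cauchy) (rule pd)
  then obtain l where l: "p \<longlonglongrightarrow> l" using Cauchy_convergent_iff convergent_def by blast
  have inK: "l \<in> K" if K: "K \<in> F" for K
  proof -
    have "\<forall>n. \<exists>x. x \<in> C (insert K (T n)) \<and> (norm x)\<^sup>2 < m (insert K (T n)) + 1 / real (Suc n)"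
    proof
      fix n
      have "finite (insert K (T n))" "insert K (T n) \<subseteq> F" using Tfin K by auto
      then show "\<exists>x. x \<in> C (insert K (T n)) \<and> (norm x)\<^sup>2 < m (insert K (T n)) + 1 / real (Suc n)"
        using mapprox[of "insert K (T n)" "1 / real (Suc n)"] by auto
    qed
    then obtain q where q: "\<And>n. q n \<in> C (insert K (T n)) \<and> (norm (q n))\<^sup>2 < m (insert K (T n)) + 1 / real (Suc n)"
      by metis
    have qK: "q n \<in> K" for n using q[of n] by (auto simp: C_def)
    have qd: "(norm (q n - p n))\<^sup>2 \<le> 6 / real (Suc n)" for n
    proof -
      have "q n \<in> C (T n)" using q[of n] Canti[of "T n" "insert K (T n)"] by blast
      then have "(norm (p n - q n))\<^sup>2 \<le> 2 * (norm (p n))\<^sup>2 + 2 * (norm (q n))\<^sup>2 - 4 * m (T n)"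
        using key[OF Tfin(2) conjunct1[OF p[of n]]] by blast
      moreover have "m (insert K (T n)) \<le> D" using mD Tfin K by simp
      moreover have "6 / real (Suc n) = 6 * (1 / real (Suc n))" by simp
      ultimately show ?thesis using conjunct2[OF p[of n]] conjunct2[OF q[of n]] TD[of n] norm_minus_commute[of "p n" "q n", THEN arg_cong[where f="\<lambda>x. x\<^sup>2"]]
        by linarith
    qed
    have "q \<longlonglongrightarrow> l" by (rule Lim_transform[OF l small_tendsto]) (rule qd)
    then show ?thesis by (rule closed_sequentially[OF cl[OF K] qK])
  qed
  have "l \<in> K0"
  proof -
    have "p n \<in> K0" for n using p[of n] by (auto simp: C_def)
    then show ?thesis by (rule closed_sequentially[OF K0(2) _ l])
  qed
  then show ?thesis using inK by blast
qed

lemma vderiv_quot: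
  fixes f :: "real \<Rightarrow> 'a::real_normed_vector"
  assumes "(f has_vector_derivative f') (at t)"
  shows "((\<lambda>s. (1 / (s - t)) *\<^sub>R (f s - f t)) \<longlongrightarrow> f') (at t)"
proof -
  have "((\<lambda>y. ((f y - f t) - (y - t) *\<^sub>R f') /\<^sub>R norm (y - t)) \<longlongrightarrow> 0) (at t)"
    using assms unfolding has_vector_derivative_def has_derivative_at_within by simp
  then have 1: "((\<lambda>y. norm (((f y - f t) - (y - t) *\<^sub>R f') /\<^sub>R norm (y - t))) \<longlongrightarrow> 0) (at t)"
    by (rule tendsto_norm_zero)
  have 2: "\<forall>\<^sub>F y in at t. norm (((f y - f t) - (y - t) *\<^sub>R f') /\<^sub>R norm (y - t)) = norm ((1 / (y - t)) *\<^sub>R (f y - f t) - f')"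
  proof (rule eventually_at_topological[THEN iffD2], intro exI[of _ UNIV] conjI ballI impI)
    fix y assume "y \<noteq> t"
    then have "(1 / (y - t)) *\<^sub>R (f y - f t) - f' = (1 / (y - t)) *\<^sub>R ((f y - f t) - (y - t) *\<^sub>R f')"
      by (simp add: scaleR_diff_right)
    then show "norm (((f y - f t) - (y - t) *\<^sub>R f') /\<^sub>R norm (y - t)) = norm ((1 / (y - t)) *\<^sub>R (f y - f t) - f')"
      by (simp add: divide_inverse mult.commute)
  qed auto
  have "((\<lambda>y. norm ((1 / (y - t)) *\<^sub>R (f y - f t) - f')) \<longlongrightarrow> 0) (at t)"
    using Lim_transform_eventually[OF 1 2] .
  then have "((\<lambda>y. (1 / (y - t)) *\<^sub>R (f y - f t) - f') \<longlongrightarrow> 0) (at t)"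
    by (rule tendsto_norm_zero_cancel)
  then show ?thesis using Lim_transform[of "\<lambda>_. f'" f' "at t"] by simp
qed


lemma ball_eq:
  fixes y v :: "'a::real_inner"
  shows "{x. inner (x - y) (x + v) \<le> 0} = cball ((1/2) *\<^sub>R (y - v)) (norm (y + v) / 2)"
proof -
  have e: "(norm (x + (1/2) *\<^sub>R (v - y)))\<^sup>2 - (norm (y + v) / 2)\<^sup>2 = inner (x - y) (x + v)" for x
  proof -
    have "(norm (v - y))\<^sup>2 - (norm (y + v))\<^sup>2 = - 4 * inner y v"
      by (simp add: power2_norm_eq_inner inner_diff_left inner_diff_right inner_add_left inner_add_right inner_commute)
    then show ?thesis
      by (simp add: sqhelp power_divide inner_diff_left inner_diff_right inner_add_left inner_add_right
          inner_commute power2_norm_eq_inner algebra_simps)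
  qed
  have d: "dist ((1/2) *\<^sub>R (y - v)) x = norm (x + (1/2) *\<^sub>R (v - y))" for x
    by (simp add: dist_norm norm_minus_commute algebra_simps)
  show ?thesis
  proof (intro set_eqI iffI)
    fix x assume "x \<in> {x. inner (x - y) (x + v) \<le> 0}"
    then have "inner (x - y) (x + v) \<le> 0" by simp
    then have "(norm (x + (1/2) *\<^sub>R (v - y)))\<^sup>2 \<le> (norm (y + v) / 2)\<^sup>2" using e[of x] by linarith
    then have "norm (x + (1/2) *\<^sub>R (v - y)) \<le> norm (y + v) / 2"
      by (rule power2_le_imp_le) simp
    then show "x \<in> cball ((1/2) *\<^sub>R (y - v)) (norm (y + v) / 2)" using d by simp
  next
    fix x assume "x \<in> cball ((1/2) *\<^sub>R (y - v)) (norm (y + v) / 2)"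
    then have "norm (x + (1/2) *\<^sub>R (v - y)) \<le> norm (y + v) / 2" using d by simp
    then have "(norm (x + (1/2) *\<^sub>R (v - y)))\<^sup>2 \<le> (norm (y + v) / 2)\<^sup>2"
      by (intro power_mono) auto
    then have "inner (x - y) (x + v) \<le> 0" using e[of x] by linarith
    then show "x \<in> {x. inner (x - y) (x + v) \<le> 0}" by simp
  qed
qed

lemma monotone_point:
  fixes G :: "('a::{real_inner,complete_space} \<times> 'a) set"
  assumes mono: "\<And>y1 v1 y2 v2. (y1,v1)\<in>G \<Longrightarrow> (y2,v2)\<in>G \<Longrightarrow> inner (y1 - y2) (v1 - v2) \<ge> 0"
  shows "\<exists>x. \<forall>(y,v)\<in>G. inner (x - y) (x + v) \<le> 0"
proof (cases "G = {}")
  case True then show ?thesis by auto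
next
  case False
  then obtain y0 v0 where g0: "(y0, v0) \<in> G" by auto
  define B where "B g = {x. inner (x - fst g) (x + snd g) \<le> 0}" for g :: "'a \<times> 'a"
  have Bc: "B g = cball ((1/2) *\<^sub>R (fst g - snd g)) (norm (fst g + snd g) / 2)" for g
    unfolding B_def by (rule ball_eq)
  have "B (y0, v0) \<inter> \<Inter>(B ` G) \<noteq> {}"
  proof (rule fip_hilbert)
    show "closed K" "convex K" if "K \<in> B ` G" for K using that by (auto simp: Bc)
    show "bounded (B (y0, v0))" "closed (B (y0, v0))" "convex (B (y0, v0))" by (auto simp: Bc)
    fix S assume S: "finite S" "S \<subseteq> B ` G"
    then obtain G' where G': "G' \<subseteq> G" "finite G'" "S = B ` G'"
      by (meson finite_subset_image)
    have "\<exists>x. \<forall>(y,v)\<in>insert (y0,v0) G'. inner (x - y) (x + v) \<le> 0"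
      using G' g0 by (intro finite_step) (auto intro: mono)
    then obtain x where x: "\<forall>(y,v)\<in>insert (y0,v0) G'. inner (x - y) (x + v) \<le> 0" by blast
    then have "x \<in> B (y0, v0) \<inter> \<Inter>S" using G' by (auto simp: B_def)
    then show "B (y0, v0) \<inter> \<Inter>S \<noteq> {}" by blast
  qed
  then obtain x where "x \<in> \<Inter>(B ` G)" by blast
  then have "\<forall>g\<in>G. inner (x - fst g) (x + snd g) \<le> 0" by (auto simp: B_def)
  then show ?thesis by (intro exI[of _ x]) (auto simp: case_prod_unfold)
qed

lemma resolvent_exists:
  fixes A :: "'a::{real_inner,complete_space} \<Rightarrow> 'a set"
  assumes mc: "max_comonotone \<rho> A" and c: "\<eta> + \<rho> > 0"
  shows "\<exists>p u. u \<in> A p \<and> z = p + \<eta> *\<^sub>R u"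
proof -
  have com: "comonotone \<rho> A" using mc by (simp add: max_comonotone_def)
  then have comI: "inner (x - y) (u - v) \<ge> \<rho> * (norm (u - v))\<^sup>2" if "u \<in> A x" "v \<in> A y" for x y u v
    using that unfolding comonotone_def by blast
  define c where "c = \<eta> + \<rho>"
  have cpos: "c > 0" using c by (simp add: c_def)
  define G where "G = (\<lambda>(y,v). (v, -(v + (1/c) *\<^sub>R (z - y - \<eta> *\<^sub>R v)))) ` graph A"
  have monoG: "inner (a1 - a2) (b1 - b2) \<ge> 0" if ab12: "(a1,b1)\<in>G" "(a2,b2)\<in>G" for a1 b1 a2 b2
  proof -
    have mem: "\<exists>y v. v \<in> A y \<and> a = v \<and> b = -(v + (1/c) *\<^sub>R (z - y - \<eta> *\<^sub>R v))"
      if ab: "(a, b) \<in> G" for a b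
    proof -
      obtain g where g: "g \<in> graph A" "(a, b) = (\<lambda>(y,v). (v, -(v + (1/c) *\<^sub>R (z - y - \<eta> *\<^sub>R v)))) g"
        using ab unfolding G_def by blast
      then show ?thesis by (cases g) (auto simp: graph_def)
    qed
    obtain y1 v1 y2 v2 where g: "v1 \<in> A y1" "v2 \<in> A y2" "a1 = v1" "a2 = v2"
      "b1 = -(v1 + (1/c) *\<^sub>R (z - y1 - \<eta> *\<^sub>R v1))" "b2 = -(v2 + (1/c) *\<^sub>R (z - y2 - \<eta> *\<^sub>R v2))"
      using mem[OF ab12(1)] mem[OF ab12(2)] by blast
    define d where "d = v1 - v2"
    define e where "e = y1 - y2"
    have "b1 - b2 = -d + (1/c) *\<^sub>R (e + \<eta> *\<^sub>R d)"
      by (simp add: g d_def e_def algebra_simps)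
    then have eq: "inner (a1 - a2) (b1 - b2) = - inner d d + (inner d e + \<eta> * inner d d) / c"
      by (simp add: g d_def[symmetric] inner_add_right inner_diff_right)
    have "inner e d \<ge> \<rho> * (norm d)\<^sup>2" using comI[OF g(1,2)] by (simp add: d_def e_def)
    then have "inner d e + \<eta> * inner d d \<ge> c * inner d d"
      by (simp add: c_def power2_norm_eq_inner inner_commute algebra_simps)
    then have "(inner d e + \<eta> * inner d d) / c \<ge> inner d d" using cpos
      by (simp add: pos_le_divide_eq mult.commute)
    then show ?thesis using eq by simp
  qed
  obtain u where u: "\<forall>(a,b)\<in>G. inner (u - a) (u + b) \<le> 0"
    using monotone_point[of G] monoG by blast
  define p where "p = z - \<eta> *\<^sub>R u"
  have rel: "inner (p - y) (u - v) \<ge> \<rho> * (norm (u - v))\<^sup>2" if "v \<in> A y" for y v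
  proof -
    define d where "d = u - v"
    define w where "w = z - y - \<eta> *\<^sub>R v"
    have "(v, -(v + (1/c) *\<^sub>R w)) \<in> G" using that by (force simp: G_def graph_def w_def)
    then have "inner d (d - (1/c) *\<^sub>R w) \<le> 0" using u by (auto simp: d_def algebra_simps)
    then have "inner d d \<le> inner d w / c" by (simp add: inner_diff_right)
    then have 1: "c * inner d d \<le> inner d w" using cpos by (simp add: le_divide_eq mult.commute)
    have "p - y = w - \<eta> *\<^sub>R d" by (simp add: p_def w_def d_def algebra_simps)
    then have "inner (p - y) (u - v) = inner d w - \<eta> * inner d d"
      by (simp add: d_def[symmetric] inner_diff_right inner_commute[of "w - \<eta> *\<^sub>R d" d])
    then show ?thesis using 1 by (simp add: c_def power2_norm_eq_inner d_def[symmetric] algebra_simps)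
  qed
  define B where "B x = (if x = p then insert u (A x) else A x)" for x
  have "comonotone \<rho> B"
    unfolding comonotone_def
  proof (intro allI impI)
    fix x1 u1 x2 u2 assume h: "u1 \<in> B x1" "u2 \<in> B x2"
    show "inner (x1 - x2) (u1 - u2) \<ge> \<rho> * (norm (u1 - u2))\<^sup>2"
    proof (cases "u1 \<in> A x1")
      case a1: True
      show ?thesis
      proof (cases "u2 \<in> A x2")
        case True then show ?thesis using a1 comI by blast
      next
        case False
        then have "x2 = p" "u2 = u" using h(2) by (auto simp: B_def split: if_splits)
        then show ?thesis using rel[OF a1] by (simp add: inner_commute norm_minus_commute
             inner_diff_left inner_diff_right)
      qed
    next
      case False
      then have 1: "x1 = p" "u1 = u" using h(1) by (auto simp: B_def split: if_splits)
      show ?thesis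
      proof (cases "u2 \<in> A x2")
        case True then show ?thesis using rel[OF True] 1 by simp
      next
        case False
        then have "x2 = p" "u2 = u" using h(2) by (auto simp: B_def split: if_splits)
        then show ?thesis using 1 by simp
      qed
    qed
  qed
  moreover have "graph A \<subseteq> graph B" by (auto simp: graph_def B_def)
  ultimately have "graph B = graph A" using mc by (simp add: max_comonotone_def)
  moreover have "(p, u) \<in> graph B" by (simp add: graph_def B_def)
  ultimately have "u \<in> A p" by (simp add: graph_def)
  then show ?thesis by (intro exI[of _ p] exI[of _ u]) (simp add: p_def)
qed

lemma yosida_prop:
  fixes A :: "'a::{real_inner,complete_space} \<Rightarrow> 'a set"
  assumes mc: "max_comonotone \<rho> A" and c: "\<eta> + \<rho> > 0" and eta: "\<eta> > 0"
  shows "yosida A \<eta> z \<in> A (resolvent A \<eta> z) \<and> z = resolvent A \<eta> z + \<eta> *\<^sub>R yosida A \<eta> z"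
proof -
  have comI: "inner (x - y) (u - v) \<ge> \<rho> * (norm (u - v))\<^sup>2" if "u \<in> A x" "v \<in> A y" for x y u v
    using that mc unfolding max_comonotone_def comonotone_def by blast
  have ex1: "\<exists>!p. z \<in> (\<lambda>u. p + \<eta> *\<^sub>R u) ` A p"
  proof (rule ex_ex1I)
    show "\<exists>p. z \<in> (\<lambda>u. p + \<eta> *\<^sub>R u) ` A p" using resolvent_exists[OF mc c, of z] by blast
  next
    fix p q assume "z \<in> (\<lambda>u. p + \<eta> *\<^sub>R u) ` A p" "z \<in> (\<lambda>u. q + \<eta> *\<^sub>R u) ` A q"
    then obtain u w where uw: "u \<in> A p" "z = p + \<eta> *\<^sub>R u" "w \<in> A q" "z = q + \<eta> *\<^sub>R w" by blast
    have pq: "p - q = \<eta> *\<^sub>R (w - u)" using uw(2,4) by (simp add: algebra_simps)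
    have "inner (p - q) (u - w) \<ge> \<rho> * (norm (u - w))\<^sup>2" using comI[OF uw(1,3)] .
    then have "- \<eta> * (norm (u - w))\<^sup>2 \<ge> \<rho> * (norm (u - w))\<^sup>2"
      unfolding pq by (simp add: power2_norm_eq_inner inner_diff_left inner_diff_right inner_commute algebra_simps)
    then have "(\<eta> + \<rho>) * (norm (u - w))\<^sup>2 \<le> 0" by (simp add: algebra_simps)
    then have "(norm (u - w))\<^sup>2 \<le> 0" using c by (simp add: mult_le_0_iff)
    then have "u = w" by simp
    then show "p = q" using pq by simp
  qed
  define P where "P = resolvent A \<eta> z"
  have "z \<in> (\<lambda>u. P + \<eta> *\<^sub>R u) ` A P"
    unfolding P_def resolvent_def by (rule theI'[OF ex1])
  then obtain u where u: "u \<in> A P" "z = P + \<eta> *\<^sub>R u" by blast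
  have "yosida A \<eta> z = (1 / \<eta>) *\<^sub>R (z - P)" by (simp add: yosida_def P_def)
  also have "z - P = \<eta> *\<^sub>R u" using u(2) by simp
  also have "(1 / \<eta>) *\<^sub>R (\<eta> *\<^sub>R u) = u" using eta by simp
  finally have Y: "yosida A \<eta> z = u" .
  show ?thesis unfolding Y P_def[symmetric] using u by blast
qed

lemma yosida_mono:
  fixes A :: "'a::{real_inner,complete_space} \<Rightarrow> 'a set"
  assumes mc: "max_comonotone \<rho> A" and c: "\<eta> + \<rho> > 0" and eta: "\<eta> > 0"
  shows "inner (z1 - z2) (yosida A \<eta> z1 - yosida A \<eta> z2) \<ge> 0"
proof -
  have comI: "inner (x - y) (u - v) \<ge> \<rho> * (norm (u - v))\<^sup>2" if "u \<in> A x" "v \<in> A y" for x y u v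
    using that mc unfolding max_comonotone_def comonotone_def by blast
  define Y1 where "Y1 = yosida A \<eta> z1"
  define Y2 where "Y2 = yosida A \<eta> z2"
  define P1 where "P1 = resolvent A \<eta> z1"
  define P2 where "P2 = resolvent A \<eta> z2"
  have 1: "Y1 \<in> A P1" "z1 = P1 + \<eta> *\<^sub>R Y1" using yosida_prop[OF mc c eta, of z1] by (simp_all add: Y1_def P1_def)
  have 2: "Y2 \<in> A P2" "z2 = P2 + \<eta> *\<^sub>R Y2" using yosida_prop[OF mc c eta, of z2] by (simp_all add: Y2_def P2_def)
  have "z1 - z2 = (P1 - P2) + \<eta> *\<^sub>R (Y1 - Y2)" using 1 2 by (simp add: algebra_simps)
  then have "inner (z1 - z2) (Y1 - Y2) = inner (P1 - P2) (Y1 - Y2) + \<eta> * (norm (Y1 - Y2))\<^sup>2"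
    by (simp add: inner_add_left power2_norm_eq_inner)
  also have "\<dots> \<ge> (\<rho> + \<eta>) * (norm (Y1 - Y2))\<^sup>2" using comI[OF 1(1) 2(1)] by (simp add: algebra_simps)
  finally have "inner (z1 - z2) (Y1 - Y2) \<ge> (\<rho> + \<eta>) * (norm (Y1 - Y2))\<^sup>2" .
  moreover have "(\<rho> + \<eta>) * (norm (Y1 - Y2))\<^sup>2 \<ge> 0" using c by simp
  ultimately show ?thesis by (simp add: Y1_def Y2_def)
qed

theorem mainTheorem1:
  fixes A :: "'a::{real_inner, complete_space} \<Rightarrow> 'a set"
    and \<rho> \<eta> :: real and I :: "real set"
    and x x' y' :: "real \<Rightarrow> 'a"
  assumes "max_comonotone \<rho> A"
    and "\<eta> > max (- 2 * \<rho>) 0"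
    and "is_interval I" and "open I"
    and "\<And>t. t \<in> I \<Longrightarrow> (x has_vector_derivative x' t) (at t)"
    and "\<And>t. t \<in> I \<Longrightarrow> ((\<lambda>s. yosida A \<eta> (x s)) has_vector_derivative y' t) (at t)"
    and "t \<in> I"
  shows "inner (x' t) (y' t) \<ge> 0"
proof -
  have eta: "\<eta> > 0" using assms(2) by simp
  have c: "\<eta> + \<rho> > 0" using assms(2) by (cases "\<rho> \<ge> 0") auto
  define Y where "Y s = yosida A \<eta> (x s)" for s
  have qx: "((\<lambda>s. (1 / (s - t)) *\<^sub>R (x s - x t)) \<longlongrightarrow> x' t) (at t)"
    by (rule vderiv_quot) (rule assms(5)[OF assms(7)])
  have qy: "((\<lambda>s. (1 / (s - t)) *\<^sub>R (Y s - Y t)) \<longlongrightarrow> y' t) (at t)"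
    unfolding Y_def by (rule vderiv_quot) (rule assms(6)[OF assms(7)])
  have lim: "((\<lambda>s. inner ((1 / (s - t)) *\<^sub>R (x s - x t)) ((1 / (s - t)) *\<^sub>R (Y s - Y t))) \<longlongrightarrow> inner (x' t) (y' t)) (at t)"
    by (rule tendsto_inner[OF qx qy])
  have ev: "\<forall>\<^sub>F s in at t. 0 \<le> inner ((1 / (s - t)) *\<^sub>R (x s - x t)) ((1 / (s - t)) *\<^sub>R (Y s - Y t))"
  proof (rule always_eventually, rule allI)
    fix s
    have "0 \<le> inner (x s - x t) (Y s - Y t)" unfolding Y_def by (rule yosida_mono[OF assms(1) c eta])
    then show "0 \<le> inner ((1 / (s - t)) *\<^sub>R (x s - x t)) ((1 / (s - t)) *\<^sub>R (Y s - Y t))"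
      by (simp add: mult_nonneg_nonneg)
  qed
  show ?thesis by (rule tendsto_lowerbound[OF lim ev]) simp
qed

end
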